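(* Induced subposets of c.i.-posets are c.i.-posets: if $P$ is a c.i.-poset and $Q$ is a poset admitting an injective map $i:Q\to P$ with $i(q)\le_Pi(q')$ if and only if $q\le_Qq'$, then $Q$ is a c.i.-poset.
   Context: All posets are finite. For a finite poset $P$, a connected order ideal is a nonempty downward-closed subset whose induced Hasse diagram is connected; $\mathcal{J}_{\mathrm{conn}}(P)$ denotes the set of these; two connected order ideals intersect nontrivially if they are neither disjoint nor nested, and $\Pi(P)$ is the set of such unordered pairs. $P$ is a c.i.-poset if $|\mathcal{J}_{\mathrm{conn}}(P)|-|\Pi(P)|=|P|$; equivalently, for any field $k$, the presentation of the ring $R_P$ (the span in $k[x_p:p\in P]$ of the monomials $\prod_px_p^{f(p)}$ over $f:P\to\mathbb{N}$ with $f(p)\ge f(p')$ whenever $p<_Pp'$) as the quotient of $k[U_J]_{J\in\mathcal{J}_{\mathrm{conn}}(P)}$ via $U_J\mapsto\prod_{p\in J}x_p$ is a complete intersection presentation; equivalently, every connected order ideal of $P$ is either principal or nearly principal, where a non-principal connected order ideal $J$ is nearly principal if exactly one pair $\{J_1,J_2\}\in\Pi(P)$ has $J_1\cup J_2=J$. *)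

theory Defs
  imports Main
begin

definition poset_on :: "'a set \<Rightarrow> ('a \<Rightarrow> 'a \<Rightarrow> bool) \<Rightarrow> bool" where
  "poset_on P le \<longleftrightarrow>
     (\<forall>x\<in>P. le x x) \<and>
     (\<forall>x\<in>P. \<forall>y\<in>P. le x y \<and> le y x \<longrightarrow> x = y) \<and>
     (\<forall>x\<in>P. \<forall>y\<in>P. \<forall>z\<in>P. le x y \<and> le y z \<longrightarrow> le x z)"

definition covers :: "'a set \<Rightarrow> ('a \<Rightarrow> 'a \<Rightarrow> bool) \<Rightarrow> 'a \<Rightarrow> 'a \<Rightarrow> bool" where
  "covers P le x y \<longleftrightarrow> x \<in> P \<and> y \<in> P \<and> le x y \<and> x \<noteq> y \<and>
     \<not> (\<exists>z\<in>P. le x z \<and> le z y \<and> z \<noteq> x \<and> z \<noteq> y)"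

definition order_ideal :: "'a set \<Rightarrow> ('a \<Rightarrow> 'a \<Rightarrow> bool) \<Rightarrow> 'a set \<Rightarrow> bool" where
  "order_ideal P le J \<longleftrightarrow> J \<subseteq> P \<and> (\<forall>x\<in>J. \<forall>y\<in>P. le y x \<longrightarrow> y \<in> J)"

definition hasse_connected :: "'a set \<Rightarrow> ('a \<Rightarrow> 'a \<Rightarrow> bool) \<Rightarrow> 'a set \<Rightarrow> bool" where
  "hasse_connected P le J \<longleftrightarrow>
     (\<forall>x\<in>J. \<forall>y\<in>J.
        (\<lambda>u v. u \<in> J \<and> v \<in> J \<and> (covers P le u v \<or> covers P le v u))\<^sup>*\<^sup>* x y)"

definition conn_ideals :: "'a set \<Rightarrow> ('a \<Rightarrow> 'a \<Rightarrow> bool) \<Rightarrow> 'a set set" where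
  "conn_ideals P le = {J. J \<noteq> {} \<and> order_ideal P le J \<and> hasse_connected P le J}"

definition nontriv_pairs :: "'a set \<Rightarrow> ('a \<Rightarrow> 'a \<Rightarrow> bool) \<Rightarrow> 'a set set set" where
  "nontriv_pairs P le = {{J1, J2} | J1 J2. J1 \<in> conn_ideals P le \<and> J2 \<in> conn_ideals P le \<and>
      J1 \<inter> J2 \<noteq> {} \<and> \<not> J1 \<subseteq> J2 \<and> \<not> J2 \<subseteq> J1}"

definition ci_poset :: "'a set \<Rightarrow> ('a \<Rightarrow> 'a \<Rightarrow> bool) \<Rightarrow> bool" where
  "ci_poset P le \<longleftrightarrow>
     int (card (conn_ideals P le)) - int (card (nontriv_pairs P le)) = int (card P)"

end

theory Submission imports Defs begin

definition hrel where
  "hrel P le J u v \<longleftrightarrow> u \<in> J \<and> v \<in> J \<and> (covers P le u v \<or> covers P le v u)"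

lemma hc_iff: "hasse_connected P le J \<longleftrightarrow> (\<forall>x\<in>J. \<forall>y\<in>J. (hrel P le J)\<^sup>*\<^sup>* x y)"
  unfolding hasse_connected_def hrel_def[abs_def] by simp

lemma hrel_rt_sym: "(hrel P le J)\<^sup>*\<^sup>* x y \<Longrightarrow> (hrel P le J)\<^sup>*\<^sup>* y x"
proof (induction rule: rtranclp_induct)
  case base then show ?case by simp
next
  case (step y z)
  have "hrel P le J z y" using step(2) by (auto simp: hrel_def)
  then show ?case using step(3) by (rule converse_rtranclp_into_rtranclp)
qed

lemma hrel_mono: "A \<subseteq> B \<Longrightarrow> (hrel P le A)\<^sup>*\<^sup>* x y \<Longrightarrow> (hrel P le B)\<^sup>*\<^sup>* x y"
proof -
  assume "A \<subseteq> B" "(hrel P le A)\<^sup>*\<^sup>* x y"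
  moreover have "hrel P le A \<le> hrel P le B" using \<open>A \<subseteq> B\<close> by (auto simp: hrel_def)
  ultimately show ?thesis using rtranclp_mono by blast
qed

lemma crossing: "r\<^sup>*\<^sup>* x y \<Longrightarrow> x \<in> A \<Longrightarrow> y \<notin> A \<Longrightarrow> \<exists>u v. r u v \<and> u \<in> A \<and> v \<notin> A"
  by (induction rule: rtranclp_induct) auto

lemma po_refl: "poset_on P le \<Longrightarrow> x \<in> P \<Longrightarrow> le x x"
  unfolding poset_on_def by blast
lemma po_antisym: "poset_on P le \<Longrightarrow> x \<in> P \<Longrightarrow> y \<in> P \<Longrightarrow> le x y \<Longrightarrow> le y x \<Longrightarrow> x = y"
  unfolding poset_on_def by blast
lemma po_trans: "poset_on P le \<Longrightarrow> x \<in> P \<Longrightarrow> y \<in> P \<Longrightarrow> z \<in> P \<Longrightarrow> le x y \<Longrightarrow> le y z \<Longrightarrow> le x z"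
  unfolding poset_on_def by blast

lemma rel_min:
  assumes "finite S" "S \<noteq> {}" "S \<subseteq> P" "poset_on P le"
  shows "\<exists>z\<in>S. \<forall>w\<in>S. le w z \<longrightarrow> w = z"
  using assms(1,2,3)
proof (induction S rule: finite_ne_induct)
  case (singleton x) then show ?case by simp
next
  case (insert x F)
  then obtain z where z: "z \<in> F" "\<forall>w\<in>F. le w z \<longrightarrow> w = z" by auto
  show ?case
  proof (cases "le x z \<and> x \<noteq> z")
    case True
    have "\<forall>w\<in>insert x F. le w x \<longrightarrow> w = x"
    proof (intro ballI impI)
      fix w assume w: "w \<in> insert x F" "le w x"
      show "w = x"
      proof (rule ccontr)
        assume "w \<noteq> x"
        then have "w \<in> F" using w by auto
        have "w \<in> P" "z \<in> P" "x \<in> P" using \<open>w \<in> F\<close> z(1) insert.prems by auto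
        then have "le w z" using po_trans[OF assms(4), of w x z] w True by auto
        then have "w = z" using z \<open>w \<in> F\<close> by auto
        then show False using po_antisym[OF assms(4), of x z] True w \<open>z \<in> P\<close> \<open>x \<in> P\<close> by auto
      qed
    qed
    then show ?thesis by auto
  next
    case False
    then show ?thesis using z by auto
  qed
qed

definition down where "down P le p = {y\<in>P. le y p}"

lemma down_path:
  assumes fin: "finite P" and po: "poset_on P le" and p: "p \<in> P"
  shows "y \<in> P \<Longrightarrow> le y p \<Longrightarrow> (hrel P le (down P le p))\<^sup>*\<^sup>* y p"
proof (induction "card {z\<in>P. le y z \<and> z \<noteq> y \<and> le z p}" arbitrary: y rule: less_induct)
  case (less y)
  show ?case
  proof (cases "y = p")
    case True then show ?thesis by simp
  next
    case False
    define S where "S = {z\<in>P. le y z \<and> z \<noteq> y \<and> le z p}"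
    have finS: "finite S" using fin by (simp add: S_def)
    have "p \<in> S" using False less p po_refl[OF po p] S_def by auto
    then obtain z where zS: "z \<in> S" and zmin: "\<forall>w\<in>S. le w z \<longrightarrow> w = z"
      using rel_min[OF finS _ _ po] S_def by blast
    have zP: "z \<in> P" "le y z" "z \<noteq> y" "le z p" using zS S_def by auto
    have cov: "covers P le y z"
      unfolding covers_def
    proof (intro conjI)
      show "\<not> (\<exists>w\<in>P. le y w \<and> le w z \<and> w \<noteq> y \<and> w \<noteq> z)"
      proof
        assume "\<exists>w\<in>P. le y w \<and> le w z \<and> w \<noteq> y \<and> w \<noteq> z"
        then obtain w where w: "w \<in> P" "le y w" "le w z" "w \<noteq> y" "w \<noteq> z" by blast
        have "le w p" using po_trans[OF po w(1) zP(1) p] w zP by auto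
        then have "w \<in> S" using w S_def by auto
        then show False using zmin w by auto
      qed
    qed (use zP less in auto)
    have sub: "{w\<in>P. le z w \<and> w \<noteq> z \<and> le w p} \<subset> S"
    proof
      show "{w\<in>P. le z w \<and> w \<noteq> z \<and> le w p} \<subseteq> S"
      proof
        fix w assume w: "w \<in> {w\<in>P. le z w \<and> w \<noteq> z \<and> le w p}"
        have "le y w" using po_trans[OF po less(2) zP(1), of w] w zP by auto
        moreover have "w \<noteq> y" using po_antisym[OF po zP(1) less(2)] w zP by auto
        ultimately show "w \<in> S" using w S_def by auto
      qed
      show "{w\<in>P. le z w \<and> w \<noteq> z \<and> le w p} \<noteq> S" using zS by auto
    qed
    have "card {w\<in>P. le z w \<and> w \<noteq> z \<and> le w p} < card S"
      using psubset_card_mono[OF finS sub] .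
    then have IH: "(hrel P le (down P le p))\<^sup>*\<^sup>* z p"
      using less(1)[of z] zP S_def by auto
    have "hrel P le (down P le p) y z" using cov zP less by (auto simp: hrel_def down_def)
    then show ?thesis using IH by (rule converse_rtranclp_into_rtranclp)
  qed
qed

lemma down_conn:
  assumes fin: "finite P" and po: "poset_on P le" and p: "p \<in> P"
  shows "down P le p \<in> conn_ideals P le"
proof -
  have "p \<in> down P le p" using po_refl[OF po p] p by (simp add: down_def)
  moreover have "order_ideal P le (down P le p)"
    unfolding order_ideal_def down_def using po_trans[OF po _ _ p] by blast
  moreover have "hasse_connected P le (down P le p)"
    unfolding hc_iff
  proof (intro ballI)
    fix x y assume "x \<in> down P le p" "y \<in> down P le p"
    then have "(hrel P le (down P le p))\<^sup>*\<^sup>* x p" "(hrel P le (down P le p))\<^sup>*\<^sup>* y p"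
      using down_path[OF fin po p] by (auto simp: down_def)
    then show "(hrel P le (down P le p))\<^sup>*\<^sup>* x y" using hrel_rt_sym by (metis rtranclp_trans)
  qed
  ultimately show ?thesis unfolding conn_ideals_def by auto
qed

lemma down_inj: "poset_on P le \<Longrightarrow> inj_on (down P le) P"
  unfolding inj_on_def down_def
proof (intro ballI impI)
  fix x y assume po: "poset_on P le" and xy: "x \<in> P" "y \<in> P" "{ya \<in> P. le ya x} = {ya \<in> P. le ya y}"
  have "le x y" using xy po_refl[OF po, of x] by blast
  moreover have "le y x" using xy po_refl[OF po, of y] by blast
  ultimately show "x = y" using po_antisym[OF po xy(1,2)] by blast
qed

lemma union_conn:
  assumes "A \<in> conn_ideals P le" "B \<in> conn_ideals P le" "A \<inter> B \<noteq> {}"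
  shows "A \<union> B \<in> conn_ideals P le"
proof -
  obtain c where c: "c \<in> A" "c \<in> B" using assms(3) by auto
  have hA: "\<forall>x\<in>A. \<forall>y\<in>A. (hrel P le A)\<^sup>*\<^sup>* x y" and hB: "\<forall>x\<in>B. \<forall>y\<in>B. (hrel P le B)\<^sup>*\<^sup>* x y"
    using assms unfolding conn_ideals_def hc_iff by auto
  have toc: "(hrel P le (A \<union> B))\<^sup>*\<^sup>* x c" if "x \<in> A \<union> B" for x
    using that hA hB c hrel_mono[of A "A \<union> B"] hrel_mono[of B "A \<union> B"] by blast
  have "hasse_connected P le (A \<union> B)"
    unfolding hc_iff using toc hrel_rt_sym by (metis rtranclp_trans)
  moreover have "order_ideal P le (A \<union> B)"
    using assms unfolding conn_ideals_def order_ideal_def by blast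
  ultimately show ?thesis using c unfolding conn_ideals_def by auto
qed

definition NP where "NP P le = conn_ideals P le - down P le ` P"

lemma pair_union_NP:
  assumes po: "poset_on P le" and S: "S \<in> nontriv_pairs P le"
  shows "\<Union>S \<in> NP P le"
proof -
  obtain J1 J2 where S: "S = {J1, J2}" and J: "J1 \<in> conn_ideals P le" "J2 \<in> conn_ideals P le"
    "J1 \<inter> J2 \<noteq> {}" "\<not> J1 \<subseteq> J2" "\<not> J2 \<subseteq> J1"
    using S unfolding nontriv_pairs_def mem_Collect_eq by (elim exE conjE) blast
  have U: "\<Union>S = J1 \<union> J2" using S by auto
  have "J1 \<union> J2 \<in> conn_ideals P le" using union_conn[OF J(1,2,3)] .
  moreover have "J1 \<union> J2 \<notin> down P le ` P"
  proof
    assume "J1 \<union> J2 \<in> down P le ` P"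
    then obtain p where p: "p \<in> P" "J1 \<union> J2 = down P le p" by auto
    have "p \<in> down P le p" using p(1) po_refl[OF po p(1)] by (simp add: down_def)
    then have pin: "p \<in> J1 \<union> J2" using p(2) by simp
    have oi: "order_ideal P le J1" "order_ideal P le J2" using J unfolding conn_ideals_def by auto
    show False
    proof (cases "p \<in> J1")
      case True
      have "J2 \<subseteq> J1"
      proof
        fix y assume "y \<in> J2"
        then have "y \<in> down P le p" using p(2) by blast
        then have "y \<in> P" "le y p" by (auto simp: down_def)
        then show "y \<in> J1" using oi(1) True unfolding order_ideal_def by blast
      qed
      then show False using J by blast
    next
      case False
      then have pJ2: "p \<in> J2" using pin by auto
      have "J1 \<subseteq> J2"
      proof
        fix y assume "y \<in> J1"
        then have "y \<in> down P le p" using p(2) by blast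
        then have "y \<in> P" "le y p" by (auto simp: down_def)
        then show "y \<in> J2" using oi(2) pJ2 unfolding order_ideal_def by blast
      qed
      then show False using J by blast
    qed
  qed
  ultimately show ?thesis using U by (simp add: NP_def)
qed

lemma NP_pair:
  assumes fin: "finite P" and po: "poset_on P le" and J: "J \<in> NP P le"
  shows "\<exists>S\<in>nontriv_pairs P le. \<Union>S = J"
proof -
  have Jc: "J \<in> conn_ideals P le" and Jnp: "J \<notin> down P le ` P" using J by (auto simp: NP_def)
  have Jne: "J \<noteq> {}" and Joi: "order_ideal P le J" and Jh: "\<forall>x\<in>J. \<forall>y\<in>J. (hrel P le J)\<^sup>*\<^sup>* x y"
    using Jc unfolding conn_ideals_def hc_iff by auto
  have JP: "J \<subseteq> P" using Joi unfolding order_ideal_def by (elim conjE)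
  have downsub: "down P le x \<subseteq> J" if "x \<in> J" for x
  proof
    fix y assume "y \<in> down P le x"
    then have "y \<in> P" "le y x" unfolding down_def by auto
    then show "y \<in> J" using Joi that unfolding order_ideal_def by (elim conjE) blast
  qed
  define C where "C = {A \<in> conn_ideals P le. A \<subseteq> J \<and> A \<noteq> J}"
  have "finite J" using finite_subset[OF JP fin] .
  moreover have "C \<subseteq> Pow J" unfolding C_def by blast
  ultimately have finC: "finite C" using finite_subset by blast
  obtain x0 where x0: "x0 \<in> J" using Jne by auto
  have x0P: "x0 \<in> P" using x0 JP by blast
  have "down P le x0 \<noteq> J"
  proof
    assume "down P le x0 = J"
    then have "J \<in> down P le ` P" using x0P by blast
    then show False using Jnp by blast
  qed
  then have "down P le x0 \<in> C" using down_conn[OF fin po x0P] downsub[OF x0] unfolding C_def by blast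
  then have "C \<noteq> {}" by auto
  then obtain A where AC: "A \<in> C" and Amax: "\<forall>B\<in>C. A \<subseteq> B \<longrightarrow> A = B"
    using finite_has_maximal[OF finC] by blast
  have Ac: "A \<in> conn_ideals P le" and AJ: "A \<subseteq> J" "A \<noteq> J" using AC C_def by auto
  obtain x where x: "x \<in> A" using Ac unfolding conn_ideals_def by auto
  obtain y where y: "y \<in> J" "y \<notin> A" using AJ by auto
  have xJ: "x \<in> J" using x AJ by blast
  have rxy: "(hrel P le J)\<^sup>*\<^sup>* x y" using Jh xJ y(1) by blast
  obtain u v where uv: "hrel P le J u v" "u \<in> A" "v \<notin> A" using crossing[OF rxy x y(2)] by blast
  have Aoi: "order_ideal P le A" using Ac conn_ideals_def by auto
  have vJ: "v \<in> J" using uv(1) unfolding hrel_def by blast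
  have vP: "v \<in> P" using vJ JP by auto
  have "\<not> covers P le v u"
  proof
    assume "covers P le v u"
    then have "le v u" "v \<in> P" by (auto simp: covers_def)
    then show False using Aoi uv unfolding order_ideal_def by blast
  qed
  then have "covers P le u v" using uv(1) unfolding hrel_def by blast
  then have uv2: "u \<in> P" "le u v" by (auto simp: covers_def)
  define B where "B = down P le v"
  have Bc: "B \<in> conn_ideals P le" using down_conn[OF fin po vP] B_def by simp
  have uB: "u \<in> B" using uv2 unfolding B_def down_def by auto
  have vB: "v \<in> B" using vP po_refl[OF po vP] unfolding B_def down_def by auto
  have BJ: "B \<subseteq> J" using downsub[OF vJ] B_def by simp
  have ABc: "A \<union> B \<in> conn_ideals P le" using union_conn[OF Ac Bc] uB uv by blast
  have ABJ: "A \<union> B = J"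
  proof (rule ccontr)
    assume "A \<union> B \<noteq> J"
    then have "A \<union> B \<in> C" using ABc AJ BJ C_def by auto
    then have "A = A \<union> B" using Amax by blast
    then show False using vB uv by auto
  qed
  have "\<not> A \<subseteq> B"
  proof
    assume "A \<subseteq> B"
    then have "J = down P le v" using ABJ B_def by auto
    then show False using Jnp vP by auto
  qed
  moreover have "\<not> B \<subseteq> A" using vB uv by auto
  moreover have "A \<inter> B \<noteq> {}" using uB uv by auto
  ultimately have "{A, B} \<in> nontriv_pairs P le" using Ac Bc unfolding nontriv_pairs_def by blast
  then show ?thesis using ABJ by (intro bexI[of _ "{A,B}"]) auto
qed

lemma Union_image_pairs:
  assumes "finite P" "poset_on P le"
  shows "Union ` nontriv_pairs P le = NP P le"
  using pair_union_NP[OF assms(2)] NP_pair[OF assms] by blast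

lemma fin_conn: "finite P \<Longrightarrow> finite (conn_ideals P le)"
  by (rule finite_subset[of _ "Pow P"]) (auto simp: conn_ideals_def order_ideal_def)

lemma fin_pairs: "finite P \<Longrightarrow> finite (nontriv_pairs P le)"
  by (rule finite_subset[of _ "Pow (conn_ideals P le)"]) (auto simp: nontriv_pairs_def fin_conn)

lemma card_conn:
  assumes fin: "finite P" and po: "poset_on P le"
  shows "card (conn_ideals P le) = card P + card (NP P le)"
proof -
  have sub: "down P le ` P \<subseteq> conn_ideals P le" using down_conn[OF fin po] by auto
  have c1: "card (down P le ` P) = card P" using card_image[OF down_inj[OF po]] .
  have "card (NP P le) = card (conn_ideals P le) - card (down P le ` P)"
    unfolding NP_def using card_Diff_subset[OF finite_subset[OF sub fin_conn[OF fin]] sub] .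
  moreover have "card (down P le ` P) \<le> card (conn_ideals P le)"
    using card_mono[OF fin_conn[OF fin] sub] .
  ultimately show ?thesis using c1 by linarith
qed

lemma ci_iff_inj:
  assumes fin: "finite P" and po: "poset_on P le"
  shows "ci_poset P le \<longleftrightarrow> inj_on Union (nontriv_pairs P le)"
proof -
  have "ci_poset P le \<longleftrightarrow> card (nontriv_pairs P le) = card (NP P le)"
    unfolding ci_poset_def using card_conn[OF fin po] by linarith
  also have "\<dots> \<longleftrightarrow> inj_on Union (nontriv_pairs P le)"
  proof
    assume "card (nontriv_pairs P le) = card (NP P le)"
    then show "inj_on Union (nontriv_pairs P le)"
      by (intro eq_card_imp_inj_on[OF fin_pairs[OF fin]]) (simp add: Union_image_pairs[OF fin po])
  next
    assume "inj_on Union (nontriv_pairs P le)"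
    then show "card (nontriv_pairs P le) = card (NP P le)"
      using card_image[of Union "nontriv_pairs P le"] Union_image_pairs[OF fin po] by simp
  qed
  finally show ?thesis .
qed

locale emb =
  fixes P :: "'a set" and leP :: "'a \<Rightarrow> 'a \<Rightarrow> bool"
    and Q :: "'b set" and leQ :: "'b \<Rightarrow> 'b \<Rightarrow> bool"
    and i :: "'b \<Rightarrow> 'a"
  assumes finP: "finite P" and poP: "poset_on P leP"
    and finQ: "finite Q" and poQ: "poset_on Q leQ"
    and inj: "inj_on i Q" and iQ: "i ` Q \<subseteq> P"
    and ord: "\<forall>q\<in>Q. \<forall>q'\<in>Q. leP (i q) (i q') \<longleftrightarrow> leQ q q'"
begin

definition phi where "phi J = {y\<in>P. \<exists>q\<in>J. leP y (i q)}"

lemma iP: "q \<in> Q \<Longrightarrow> i q \<in> P" using iQ by blast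

lemma phi_pre:
  assumes "order_ideal Q leQ J"
  shows "{q\<in>Q. i q \<in> phi J} = J"
proof
  have JQ: "J \<subseteq> Q" using assms unfolding order_ideal_def by (elim conjE)
  show "{q\<in>Q. i q \<in> phi J} \<subseteq> J"
  proof
    fix q assume "q \<in> {q\<in>Q. i q \<in> phi J}"
    then obtain q' where q: "q \<in> Q" "q' \<in> J" "leP (i q) (i q')" unfolding phi_def by blast
    have "leQ q q'" using ord q JQ by blast
    then show "q \<in> J" using assms q unfolding order_ideal_def by (elim conjE) blast
  qed
  show "J \<subseteq> {q\<in>Q. i q \<in> phi J}"
  proof
    fix q assume q: "q \<in> J"
    then have "q \<in> Q" using JQ by blast
    then have "i q \<in> phi J" using q iP po_refl[OF poP iP] unfolding phi_def by blast
    then show "q \<in> {q\<in>Q. i q \<in> phi J}" using \<open>q \<in> Q\<close> by blast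
  qed
qed

lemma phi_sub:
  assumes "order_ideal Q leQ A" "order_ideal Q leQ B" "phi A \<subseteq> phi B"
  shows "A \<subseteq> B"
  using phi_pre[OF assms(1)] phi_pre[OF assms(2)] assms(3) by blast

lemma phi_inj: "inj_on phi (conn_ideals Q leQ)"
proof (rule inj_onI)
  fix A B assume "A \<in> conn_ideals Q leQ" "B \<in> conn_ideals Q leQ" "phi A = phi B"
  then have "order_ideal Q leQ A" "order_ideal Q leQ B" unfolding conn_ideals_def by auto
  then show "A = B" using phi_sub \<open>phi A = phi B\<close> by blast
qed

lemma phi_union: "phi (A \<union> B) = phi A \<union> phi B" unfolding phi_def by blast

lemma phi_inter: "A \<subseteq> Q \<Longrightarrow> A \<inter> B \<noteq> {} \<Longrightarrow> phi A \<inter> phi B \<noteq> {}"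
proof -
  assume "A \<subseteq> Q" "A \<inter> B \<noteq> {}"
  then obtain q where q: "q \<in> A" "q \<in> B" "q \<in> Q" by blast
  then have "i q \<in> phi A" "i q \<in> phi B"
    using iP[OF q(3)] po_refl[OF poP iP[OF q(3)]] unfolding phi_def by blast+
  then show ?thesis by blast
qed

lemma phi_conn:
  assumes J: "J \<in> conn_ideals Q leQ"
  shows "phi J \<in> conn_ideals P leP"
proof -
  have Jne: "J \<noteq> {}" and Joi: "order_ideal Q leQ J" and Jh: "\<forall>x\<in>J. \<forall>y\<in>J. (hrel Q leQ J)\<^sup>*\<^sup>* x y"
    using J unfolding conn_ideals_def hc_iff by auto
  have JQ: "J \<subseteq> Q" using Joi unfolding order_ideal_def by (elim conjE)
  have downsub: "down P leP (i q) \<subseteq> phi J" if "q \<in> J" for q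
    using that unfolding down_def phi_def by blast
  have le_path: "(hrel P leP (phi J))\<^sup>*\<^sup>* y (i q)" if "q \<in> J" "y \<in> P" "leP y (i q)" for y q
  proof -
    have "i q \<in> P" using that JQ iP by blast
    then have "(hrel P leP (down P leP (i q)))\<^sup>*\<^sup>* y (i q)"
      using down_path[OF finP poP] that by blast
    then show ?thesis using hrel_mono[OF downsub[OF that(1)]] by blast
  qed
  have qpath: "(hrel P leP (phi J))\<^sup>*\<^sup>* (i a) (i b)" if "(hrel Q leQ J)\<^sup>*\<^sup>* a b" for a b
    using that
  proof (induction rule: rtranclp_induct)
    case base then show ?case by simp
  next
    case (step y z)
    have yz: "y \<in> J" "z \<in> J" "covers Q leQ y z \<or> covers Q leQ z y" using step(2) unfolding hrel_def by auto
    have yQ: "y \<in> Q" "z \<in> Q" using yz JQ by auto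
    have "(hrel P leP (phi J))\<^sup>*\<^sup>* (i y) (i z)"
    proof (cases "covers Q leQ y z")
      case True
      then have "leQ y z" unfolding covers_def by blast
      then have "leP (i y) (i z)" using ord yQ by blast
      then show ?thesis by (rule le_path[OF yz(2) iP[OF yQ(1)]])
    next
      case False
      then have "covers Q leQ z y" using yz by blast
      then have "leQ z y" unfolding covers_def by blast
      then have "leP (i z) (i y)" using ord yQ by blast
      then show ?thesis by (rule hrel_rt_sym[OF le_path[OF yz(1) iP[OF yQ(2)]]])
    qed
    then show ?case using step(3) by (meson rtranclp_trans)
  qed
  have "hasse_connected P leP (phi J)"
    unfolding hc_iff
  proof (intro ballI)
    fix x y assume x: "x \<in> phi J" and y: "y \<in> phi J"
    obtain qx where qx: "qx \<in> J" "leP x (i qx)" "x \<in> P" using x unfolding phi_def by blast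
    obtain qy where qy: "qy \<in> J" "leP y (i qy)" "y \<in> P" using y unfolding phi_def by blast
    have 1: "(hrel P leP (phi J))\<^sup>*\<^sup>* x (i qx)" using le_path[OF qx(1,3,2)] .
    have 2: "(hrel P leP (phi J))\<^sup>*\<^sup>* (i qx) (i qy)" using qpath[OF Jh[rule_format, OF qx(1) qy(1)]] .
    have 3: "(hrel P leP (phi J))\<^sup>*\<^sup>* (i qy) y" using hrel_rt_sym[OF le_path[OF qy(1,3,2)]] .
    show "(hrel P leP (phi J))\<^sup>*\<^sup>* x y" using 1 2 3 by (meson rtranclp_trans)
  qed
  moreover have "order_ideal P leP (phi J)"
    unfolding order_ideal_def
  proof (intro conjI ballI impI)
    show "phi J \<subseteq> P" unfolding phi_def by blast
    fix x y assume x: "x \<in> phi J" and y: "y \<in> P" "leP y x"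
    obtain q where q: "q \<in> J" "leP x (i q)" "x \<in> P" using x unfolding phi_def by blast
    have "leP y (i q)" using po_trans[OF poP y(1) q(3) iP] q y JQ by blast
    then show "y \<in> phi J" using q y unfolding phi_def by blast
  qed
  moreover have "phi J \<noteq> {}"
  proof -
    obtain q where "q \<in> J" using Jne by blast
    then have "i q \<in> phi J" using JQ iP po_refl[OF poP] unfolding phi_def by blast
    then show ?thesis by blast
  qed
  ultimately show ?thesis unfolding conn_ideals_def by blast
qed

lemma phi_pair:
  assumes S: "S \<in> nontriv_pairs Q leQ"
  shows "phi ` S \<in> nontriv_pairs P leP" and "S \<subseteq> conn_ideals Q leQ"
proof -
  obtain J1 J2 where S: "S = {J1, J2}" and J: "J1 \<in> conn_ideals Q leQ" "J2 \<in> conn_ideals Q leQ"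
    "J1 \<inter> J2 \<noteq> {}" "\<not> J1 \<subseteq> J2" "\<not> J2 \<subseteq> J1"
    using S unfolding nontriv_pairs_def mem_Collect_eq by (elim exE conjE) blast
  have oi: "order_ideal Q leQ J1" "order_ideal Q leQ J2" using J unfolding conn_ideals_def by auto
  have J1Q: "J1 \<subseteq> Q" using oi unfolding order_ideal_def by blast
  have "phi J1 \<in> conn_ideals P leP" "phi J2 \<in> conn_ideals P leP" using phi_conn J by auto
  moreover have "phi J1 \<inter> phi J2 \<noteq> {}" using phi_inter[OF J1Q J(3)] .
  moreover have "\<not> phi J1 \<subseteq> phi J2" using phi_sub[OF oi] J(4) by blast
  moreover have "\<not> phi J2 \<subseteq> phi J1" using phi_sub[OF oi(2,1)] J(5) by blast
  ultimately have "{phi J1, phi J2} \<in> nontriv_pairs P leP" unfolding nontriv_pairs_def by blast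
  then show "phi ` S \<in> nontriv_pairs P leP" using S by simp
  show "S \<subseteq> conn_ideals Q leQ" using S J by blast
qed

lemma inj_transfer:
  assumes "inj_on Union (nontriv_pairs P leP)"
  shows "inj_on Union (nontriv_pairs Q leQ)"
proof (rule inj_onI)
  fix S1 S2 assume S: "S1 \<in> nontriv_pairs Q leQ" "S2 \<in> nontriv_pairs Q leQ" "\<Union>S1 = \<Union>S2"
  have "\<Union>(phi ` S1) = phi (\<Union>S1)" "\<Union>(phi ` S2) = phi (\<Union>S2)"
    unfolding phi_def by blast+
  then have "\<Union>(phi ` S1) = \<Union>(phi ` S2)" using S(3) by simp
  then have "phi ` S1 = phi ` S2" by (rule inj_onD[OF assms _ phi_pair(1)[OF S(1)] phi_pair(1)[OF S(2)]])
  then show "S1 = S2"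
    using inj_on_image_eq_iff[OF phi_inj phi_pair(2)[OF S(1)] phi_pair(2)[OF S(2)]] by blast
qed

end

theorem corollary10p3:
  fixes P :: "'a set" and leP :: "'a \<Rightarrow> 'a \<Rightarrow> bool"
    and Q :: "'b set" and leQ :: "'b \<Rightarrow> 'b \<Rightarrow> bool"
    and i :: "'b \<Rightarrow> 'a"
  assumes "finite P" and "poset_on P leP"
    and "finite Q" and "poset_on Q leQ"
    and "ci_poset P leP"
    and "inj_on i Q" and "i ` Q \<subseteq> P"
    and "\<forall>q\<in>Q. \<forall>q'\<in>Q. leP (i q) (i q') \<longleftrightarrow> leQ q q'"
  shows "ci_poset Q leQ"
proof -
  interpret emb P leP Q leQ i using assms by unfold_locales
  have "inj_on Union (nontriv_pairs P leP)" using ci_iff_inj[OF assms(1,2)] assms(5) by blast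
  then have "inj_on Union (nontriv_pairs Q leQ)" by (rule inj_transfer)
  then show ?thesis using ci_iff_inj[OF assms(3,4)] by blast
qed

end
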